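(* Let $a^*$ and $b^*$ be the right and left endpoints (possibly infinite) of the interval $\mathbf{R}_j$. Then: - $a^*\notin\mathbf{R}_j$ if and only if $m_{j,0}((c,a^* ))=\infty$ for every $c\in(b^*,a^* )$; - $b^*\notin\mathbf{R}_j$ if and only if $m_{j,0}((b^*,c))=\infty$ for every $c\in(b^*,a^* )$.
   Context: Let $m$ be Lebesgue measure. Let $G\subset\mathbf{R}$ be open such that $m(G\cap(a,b))>0$ for every nonempty bounded open interval $(a,b)$, and let $F=\mathbf{R}\setminus G$ satisfy $m(F)>0$ and have no isolated points. Assume $m(G)=\infty$. Write $G=\bigcup_{n\ge1}I_n$, where $I_n=(a_n,b_n)$ are its disjoint components, and let $H=\{a_n,b_n:n\ge1\}\setminus\{\pm\infty\}$. Fix $z\in F\setminus H$ and define $j(x)=\int_z^x1_F(t)\,dt$ for $x\in\mathbf{R}$. Then $j$ is nondecreasing, $\mathbf{R}_j:=j(\mathbf{R})$ is an interval, and $j$ is constant exactly on each closure $\bar I_n$; write $p_n^*=j(\bar I_n)$. Let $m_j=m\circ j^{-1}$ be the image measure on $\mathbf{R}_j$, $\mathbf{R}_{j,0}$ the interior of $\mathbf{R}_j$, and $m_{j,0}=m_j|_{\mathbf{R}_{j,0}}$. *)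

theory Defs
  imports "HOL-Analysis.Analysis"
begin

definition comp_endpoints :: "real set \<Rightarrow> real set" where
  "comp_endpoints G =
     {Inf C | C. C \<in> components G \<and> bdd_below C} \<union>
     {Sup C | C. C \<in> components G \<and> bdd_above C}"

definition jfun :: "real set \<Rightarrow> real \<Rightarrow> real \<Rightarrow> real" where
  "jfun F z x = (LBINT t=ereal z..ereal x. indicator F t)"

end

theory Submission imports Defs begin

lemma Ioo_fin: "emeasure lborel {x<..<y::real} < \<infinity>"
proof (cases "x \<le> y")
  case True then show ?thesis by simp
next
  case False then have "{x<..<y} = {}" by auto
  then show ?thesis by simp
qed

lemma j_int:
  assumes "closed F"
  shows "interval_lebesgue_integrable lborel (ereal a) (ereal b) (indicator F :: real \<Rightarrow> real)"
proof -
  have *: "set_integrable lborel {x<..<y} (indicator F :: real \<Rightarrow> real)" for x y :: real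
  proof -
    have "(\<lambda>t. indicator {x<..<y} t *\<^sub>R (indicator F t::real)) = (\<lambda>t. indicator ({x<..<y} \<inter> F) t *\<^sub>R (1::real))"
      by (auto simp: indicator_def)
    moreover have "emeasure lborel ({x<..<y} \<inter> F) < \<infinity>"
      by (rule le_less_trans[OF emeasure_mono[of _ "{x<..<y}"] Ioo_fin]) auto
    ultimately show ?thesis unfolding set_integrable_def
      using assms by (auto intro!: integrable_indicator)
  qed
  show ?thesis unfolding interval_lebesgue_integrable_def using * by simp
qed

lemma j_diff:
  assumes "closed F" "x \<le> y"
  shows "jfun F z y - jfun F z x = measure lborel (F \<inter> {x<..<y})"
proof -
  have "jfun F z x + (LBINT t=ereal x..ereal y. indicator F t) = jfun F z y"
    unfolding jfun_def using j_int[OF assms(1)]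
    by (metis interval_integral_sum min_def max_def)
  moreover have "(LBINT t=ereal x..ereal y. indicator F t) = measure lborel (F \<inter> {x<..<y})"
  proof -
    have "(LBINT t=ereal x..ereal y. indicator F t) = (LINT t|lborel. indicator ({x<..<y} \<inter> F) t :: real)"
      unfolding interval_lebesgue_integral_def set_lebesgue_integral_def using assms(2)
      by (auto intro!: Bochner_Integration.integral_cong simp: indicator_def)
    also have "\<dots> = measure lborel (F \<inter> {x<..<y})" by (simp add: Int_commute)
    finally show ?thesis .
  qed
  ultimately show ?thesis by simp
qed

lemma j_mono: "closed F \<Longrightarrow> mono (jfun F z)"
  unfolding mono_def using j_diff by (metis diff_ge_0_iff_ge measure_nonneg)

lemma j_lip: "closed F \<Longrightarrow> x \<le> y \<Longrightarrow> jfun F z y - jfun F z x \<le> y - x"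
proof -
  assume a: "closed F" "x \<le> y"
  have "measure lborel (F \<inter> {x<..<y}) \<le> measure lborel {x<..<y}"
    by (rule measure_mono_fmeasurable) (use Ioo_fin[of x y] in \<open>auto simp: fmeasurable_def a(1) borel_closed\<close>)
  then show ?thesis using j_diff[OF a] a by simp
qed

lemma j_cont: "closed F \<Longrightarrow> continuous_on UNIV (jfun F z)"
proof -
  assume c: "closed F"
  have "dist (jfun F z x) (jfun F z y) \<le> dist x y" for x y
    using j_lip[OF c, of x y] j_lip[OF c, of y x] j_mono[OF c, unfolded mono_def, rule_format, of x y]
      j_mono[OF c, unfolded mono_def, rule_format, of y x]
    by (cases "x \<le> y") (auto simp: dist_real_def)
  then have "lipschitz_on 1 UNIV (jfun F z)" by (auto intro: lipschitz_onI)
  then show ?thesis by (rule lipschitz_on_continuous_on)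
qed


lemma Ici_inf: "emeasure lborel {x::real..} = \<infinity>"
proof (rule ccontr)
  assume "emeasure lborel {x..} \<noteq> \<infinity>"
  then obtain r where r: "emeasure lborel {x..} = ennreal r" "r \<ge> 0"
    by (cases "emeasure lborel {x..}" rule: ennreal_cases) auto
  have "emeasure lborel {x..x+r+1} \<le> emeasure lborel {x..}" by (rule emeasure_mono) auto
  then have "ennreal (r+1) \<le> ennreal r" using r by simp
  then show False using r by simp
qed

lemma Iic_inf: "emeasure lborel {..x::real} = \<infinity>"
proof (rule ccontr)
  assume "emeasure lborel {..x} \<noteq> \<infinity>"
  then obtain r where r: "emeasure lborel {..x} = ennreal r" "r \<ge> 0"
    by (cases "emeasure lborel {..x}" rule: ennreal_cases) auto
  have "emeasure lborel {x-r-1..x} \<le> emeasure lborel {..x}" by (rule emeasure_mono) auto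
  then have "ennreal (r+1) \<le> ennreal r" using r by simp
  then show False using r by simp
qed

lemma interior_pt:
  fixes j :: "real \<Rightarrow> real"
  assumes mono: "mono j" and cont: "continuous_on UNIV j"
    and "j x1 < j x" "j x < j x2"
  shows "j x \<in> interior (range j)"
proof -
  have x12: "x1 \<le> x2"
  proof (rule ccontr)
    assume "\<not> x1 \<le> x2"
    then have "j x2 \<le> j x1" using mono by (simp add: mono_def)
    then show False using assms by simp
  qed
  have "{j x1<..<j x2} \<subseteq> range j"
  proof
    fix t assume "t \<in> {j x1<..<j x2}"
    then obtain y where "j y = t" using IVT'[of j x1 t x2] x12 continuous_on_subset[OF cont] by force
    then show "t \<in> range j" by auto
  qed
  moreover have "j x \<in> {j x1<..<j x2}" using assms by auto
  ultimately show ?thesis by (meson interior_maximal interior_subset open_greaterThanLessThan subsetD)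
qed

lemma abstract:
  fixes j :: "real \<Rightarrow> real"
  assumes mono: "mono j" and cont: "continuous_on UNIV j" and nc: "j u1 \<noteq> j u2"
    and adef: "a = (SUP x. ereal (j x))" and bdef: "b = (INF x. ereal (j x))"
  shows "(a \<notin> ereal ` range j \<longleftrightarrow>
               (\<forall>c. b < ereal c \<and> ereal c < a \<longrightarrow>
                   emeasure (distr lborel borel j) ({y. ereal c < ereal y \<and> ereal y < a} \<inter> interior (range j)) = \<infinity>))
          \<and> (b \<notin> ereal ` range j \<longleftrightarrow>
               (\<forall>c. b < ereal c \<and> ereal c < a \<longrightarrow>
                   emeasure (distr lborel borel j) ({y. b < ereal y \<and> ereal y < ereal c} \<inter> interior (range j)) = \<infinity>))"
proof -
  let ?S = "interior (range j)"
  have meas: "j \<in> measurable lborel borel" using borel_measurable_mono[OF mono] by simp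
  have mj: "emeasure (distr lborel borel j) (A \<inter> ?S) = emeasure lborel (j -` (A \<inter> ?S))"
    if "A \<in> sets borel" for A
    using emeasure_distr[OF meas, of "A \<inter> ?S"] that by auto
  have setA: "{y. ereal c < ereal y \<and> ereal y < a} \<in> sets borel" for c by measurable
  have setB: "{y. b < ereal y \<and> ereal y < ereal c} \<in> sets borel" for c by measurable
  have pre_meas: "j -` (A \<inter> ?S) \<in> sets lborel" if "A \<in> sets borel" for A
    using measurable_sets[OF meas, of "A \<inter> ?S"] that by auto
  have ub: "ereal (j x) \<le> a" for x unfolding adef by (rule SUP_upper) auto
  have lb: "b \<le> ereal (j x)" for x unfolding bdef by (rule INF_lower) auto
  have ba: "b < a"
  proof (cases "j u1 < j u2")
    case True then have "ereal (j u1) < ereal (j u2)" by simp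
    then show ?thesis using lb[of u1] ub[of u2] by (meson le_less_trans less_le_trans)
  next
    case False then have "j u2 < j u1" using nc by simp
    then have "ereal (j u2) < ereal (j u1)" by simp
    then show ?thesis using lb[of u2] ub[of u1] by (meson le_less_trans less_le_trans)
  qed
  have above: "\<exists>x. c < j x" if "ereal c < a" for c
    using that unfolding adef by (simp add: less_SUP_iff)
  have below: "\<exists>x. j x < c" if "b < ereal c" for c
    using that unfolding bdef by (simp add: INF_less_iff)
  have jle: "j x \<le> j y" if "x \<le> y" for x y using mono that by (simp add: mono_def)
  show ?thesis
  proof (intro conjI iffI allI impI)
    fix c assume na: "a \<notin> ereal ` range j" and c: "b < ereal c \<and> ereal c < a"
    obtain x0 where x0: "c < j x0" using above c by blast
    obtain x1 where x1: "j x1 < c" using below c by blast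
    have "{x0..} \<subseteq> j -` ({y. ereal c < ereal y \<and> ereal y < a} \<inter> ?S)"
    proof
      fix x assume "x \<in> {x0..}"
      then have cx: "c < j x" using jle[of x0 x] x0 by auto
      have "ereal (j x) \<noteq> a" using na by auto
      then have xa: "ereal (j x) < a" using ub[of x] by auto
      then obtain x2 where "j x < j x2" using above by blast
      then have "j x \<in> ?S" using interior_pt[OF mono cont, of x1 x x2] x1 cx by auto
      then show "x \<in> j -` ({y. ereal c < ereal y \<and> ereal y < a} \<inter> ?S)" using cx xa by auto
    qed
    then have "emeasure lborel {x0..} \<le> emeasure lborel (j -` ({y. ereal c < ereal y \<and> ereal y < a} \<inter> ?S))"
      by (rule emeasure_mono) (rule pre_meas[OF setA])
    then show "emeasure (distr lborel borel j) ({y. ereal c < ereal y \<and> ereal y < a} \<inter> ?S) = \<infinity>"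
      using mj[OF setA] Ici_inf by (simp add: top_unique)
  next
    assume H: "\<forall>c. b < ereal c \<and> ereal c < a \<longrightarrow>
                   emeasure (distr lborel borel j) ({y. ereal c < ereal y \<and> ereal y < a} \<inter> ?S) = \<infinity>"
    show "a \<notin> ereal ` range j"
    proof
      assume "a \<in> ereal ` range j"
      then obtain x0 where a0: "a = ereal (j x0)" by auto
      obtain x1 where x1: "j x1 < j x0" using below[of "j x0"] ba a0 by auto
      define c where "c = (j x1 + j x0) / 2"
      have c: "b < ereal c \<and> ereal c < a" using lb[of x1] x1 a0 unfolding c_def
        by (auto intro: le_less_trans)
      have "j -` ({y. ereal c < ereal y \<and> ereal y < a} \<inter> ?S) \<subseteq> {x1..x0}"
      proof
        fix x assume "x \<in> j -` ({y. ereal c < ereal y \<and> ereal y < a} \<inter> ?S)"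
        then have "c < j x" "j x < j x0" using a0 by auto
        then show "x \<in> {x1..x0}" using jle[of x x1] jle[of x0 x] x1 unfolding c_def by force
      qed
      then have "emeasure lborel (j -` ({y. ereal c < ereal y \<and> ereal y < a} \<inter> ?S)) \<le> emeasure lborel {x1..x0}"
        by (rule emeasure_mono) simp
      moreover have "x1 \<le> x0" using jle[of x0 x1] x1 by force
      ultimately show False using H c mj[OF setA] by (simp add: top_unique)
    qed
  next
    fix c assume na: "b \<notin> ereal ` range j" and c: "b < ereal c \<and> ereal c < a"
    obtain x0 where x0: "j x0 < c" using below c by blast
    obtain x1 where x1: "c < j x1" using above c by blast
    have "{..x0} \<subseteq> j -` ({y. b < ereal y \<and> ereal y < ereal c} \<inter> ?S)"
    proof
      fix x assume "x \<in> {..x0}"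
      then have cx: "j x < c" using jle[of x x0] x0 by auto
      have "ereal (j x) \<noteq> b" using na by auto
      then have xa: "b < ereal (j x)" using lb[of x] by auto
      then obtain x2 where "j x2 < j x" using below by blast
      then have "j x \<in> ?S" using interior_pt[OF mono cont, of x2 x x1] x1 cx by auto
      then show "x \<in> j -` ({y. b < ereal y \<and> ereal y < ereal c} \<inter> ?S)" using cx xa by auto
    qed
    then have "emeasure lborel {..x0} \<le> emeasure lborel (j -` ({y. b < ereal y \<and> ereal y < ereal c} \<inter> ?S))"
      by (rule emeasure_mono) (rule pre_meas[OF setB])
    then show "emeasure (distr lborel borel j) ({y. b < ereal y \<and> ereal y < ereal c} \<inter> ?S) = \<infinity>"
      using mj[OF setB] Iic_inf by (simp add: top_unique)
  next
    assume H: "\<forall>c. b < ereal c \<and> ereal c < a \<longrightarrow>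
                   emeasure (distr lborel borel j) ({y. b < ereal y \<and> ereal y < ereal c} \<inter> ?S) = \<infinity>"
    show "b \<notin> ereal ` range j"
    proof
      assume "b \<in> ereal ` range j"
      then obtain x0 where b0: "b = ereal (j x0)" by auto
      obtain x1 where x1: "j x0 < j x1" using above[of "j x0"] ba b0 by auto
      define c where "c = (j x1 + j x0) / 2"
      have "ereal c < ereal (j x1)" using x1 unfolding c_def by simp
      then have "ereal c < a" using ub[of x1] by (rule less_le_trans)
      moreover have "b < ereal c" using x1 b0 unfolding c_def by simp
      ultimately have c: "b < ereal c \<and> ereal c < a" by simp
      have "j -` ({y. b < ereal y \<and> ereal y < ereal c} \<inter> ?S) \<subseteq> {x0..x1}"
      proof
        fix x assume "x \<in> j -` ({y. b < ereal y \<and> ereal y < ereal c} \<inter> ?S)"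
        then have "j x < c" "j x0 < j x" using b0 by auto
        then show "x \<in> {x0..x1}" using jle[of x1 x] jle[of x x0] x1 unfolding c_def by force
      qed
      then have "emeasure lborel (j -` ({y. b < ereal y \<and> ereal y < ereal c} \<inter> ?S)) \<le> emeasure lborel {x0..x1}"
        by (rule emeasure_mono) simp
      moreover have "x0 \<le> x1" using jle[of x1 x0] x1 by force
      ultimately show False using H c mj[OF setB] by (simp add: top_unique)
    qed
  qed
qed

lemma nonconst:
  assumes "closed F" "emeasure lborel F > 0"
  shows "\<exists>u1 u2. jfun F z u1 \<noteq> jfun F z u2"
proof (rule ccontr)
  assume "\<not> ?thesis"
  then have eq: "jfun F z u1 = jfun F z u2" for u1 u2 by auto
  have Fb: "F \<in> sets borel" using assms(1) borel_closed by auto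
  have "F \<inter> {- real n<..<real n} \<in> null_sets lborel" for n :: nat
  proof -
    have m0: "measure lborel (F \<inter> {- real n<..<real n}) = 0"
      using j_diff[OF assms(1), of "- real n" "real n" z] eq[of "real n" "- real n"] by simp
    have "emeasure lborel (F \<inter> {- real n<..<real n}) \<le> emeasure lborel {- real n<..<real n}"
      by (rule emeasure_mono) auto
    then have "emeasure lborel (F \<inter> {- real n<..<real n}) < \<infinity>" using Ioo_fin[of "- real n" "real n"] by (meson le_less_trans)
    then have "emeasure lborel (F \<inter> {- real n<..<real n}) = 0"
      using m0 emeasure_eq_ennreal_measure[of lborel "F \<inter> {- real n<..<real n}"] by simp
    then show ?thesis using Fb by (simp add: null_sets_def)
  qed
  then have "(\<Union>n. F \<inter> {- real n<..<real n}) \<in> null_sets lborel" by blast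
  moreover have "(\<Union>n. F \<inter> {- real n<..<real n}) = F"
  proof safe
    fix x assume "x \<in> F"
    obtain n :: nat where "\<bar>x\<bar> < real n" using reals_Archimedean2 by blast
    then show "x \<in> (\<Union>n. F \<inter> {- real n<..<real n})" using \<open>x \<in> F\<close> by (auto intro!: exI[of _ n])
  qed
  ultimately show False using assms(2) by auto
qed

theorem mainTheorem12:
  fixes G :: "real set" and z :: real
  assumes "open G"
    and "\<forall>a b. a < b \<longrightarrow> emeasure lborel (G \<inter> {a<..<b}) > 0"
    and "emeasure lborel (- G) > 0"
    and "\<forall>x\<in>- G. x islimpt (- G)"
    and "emeasure lborel G = \<infinity>"
    and "z \<in> - G" and "z \<notin> comp_endpoints G"
  shows "let j = jfun (- G) z; Rj = range j;
             mj0 = (\<lambda>A. emeasure (distr lborel borel j) (A \<inter> interior Rj));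
             astar = (SUP x. ereal (j x)); bstar = (INF x. ereal (j x))
         in (astar \<notin> ereal ` Rj \<longleftrightarrow>
               (\<forall>c. bstar < ereal c \<and> ereal c < astar \<longrightarrow>
                   mj0 {y. ereal c < ereal y \<and> ereal y < astar} = \<infinity>))
          \<and> (bstar \<notin> ereal ` Rj \<longleftrightarrow>
               (\<forall>c. bstar < ereal c \<and> ereal c < astar \<longrightarrow>
                   mj0 {y. bstar < ereal y \<and> ereal y < ereal c} = \<infinity>))"
proof -
  have cl: "closed (- G)" using assms(1) by (simp add: closed_Compl)
  obtain u1 u2 where nc: "jfun (- G) z u1 \<noteq> jfun (- G) z u2"
    using nonconst[OF cl assms(3)] by blast
  show ?thesis unfolding Let_def
    by (rule abstract[OF j_mono[OF cl] j_cont[OF cl] nc refl refl])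
qed

end
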